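(* Let $X$ be an FK-space containing $\phi$ in which $\overline{\phi}$ (the closure of $\phi$ in $X$) has $\sigma_p^q[K]$. Then $D_p^qF^+(X)=(\overline{\phi})^{dd}$.
   Context: An FK-space is a vector subspace of the space $w$ of all complex sequences with a complete metrizable locally convex topology in which coordinate functionals are continuous; $X'$ is its continuous dual. $\delta^j$ has $1$ in position $j$, $0$ elsewhere; $\phi=\operatorname{span}\{\delta^j\}$. $p(n)<q(n)$ are nonnegative integer sequences with $q(n)\to\infty$. For $x\in w$, $x^{(k)}=\sum_{j=1}^kx_j\delta^j$; a subset $Y\subseteq X$ has $\sigma_p^q[K]$ if $\frac{1}{q(n)-p(n)}\sum_{k=p(n)+1}^{q(n)}x^{(k)}\to x$ in $X$ for every $x\in Y$. $\sigma_p^q[s]=\{x:\lim_n\frac{1}{q(n)-p(n)}\sum_{k=p(n)+1}^{q(n)}\sum_{j=1}^kx_j\text{ exists}\}$; for $E\subseteq w$, $E^d=\{x\in w:(x_ny_n)_n\in\sigma_p^q[s]\ \forall y\in E\}$ and $E^{dd}=(E^d)^d$. $D_p^qF^+(X)=\{x\in w:\lim_n\frac{1}{q(n)-p(n)}\sum_{k=p(n)+1}^{q(n)}\sum_{j=1}^kx_jf(\delta^j)\text{ exists }\forall f\in X'\}$. *)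

theory Defs
  imports "HOL-Analysis.Analysis"
begin

text \<open>Complex sequences (the space w) are functions nat => complex, indexed from 0.\<close>
type_synonym seq = "nat \<Rightarrow> complex"

definition seq_add :: "seq \<Rightarrow> seq \<Rightarrow> seq" where
  "seq_add x y = (\<lambda>j. x j + y j)"

definition seq_smult :: "complex \<Rightarrow> seq \<Rightarrow> seq" where
  "seq_smult c x = (\<lambda>j. c * x j)"

definition seq_diff :: "seq \<Rightarrow> seq \<Rightarrow> seq" where
  "seq_diff x y = (\<lambda>j. x j - y j)"

definition zero_seq :: seq where
  "zero_seq = (\<lambda>j. 0)"

definition delta :: "nat \<Rightarrow> seq" where
  "delta j = (\<lambda>i. if i = j then 1 else 0)"

definition phi :: "seq set" where
  "phi = {x. \<exists>F. finite F \<and> (\<exists>c. x = (\<lambda>i. \<Sum>j\<in>F. c j * delta j i))}"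

definition sec :: "seq \<Rightarrow> nat \<Rightarrow> seq" where
  "sec x k = (\<lambda>i. if i < k then x i else 0)"

definition is_subspace :: "seq set \<Rightarrow> bool" where
  "is_subspace X \<longleftrightarrow> zero_seq \<in> X \<and> (\<forall>x\<in>X. \<forall>y\<in>X. seq_add x y \<in> X)
      \<and> (\<forall>c. \<forall>x\<in>X. seq_smult c x \<in> X)"

definition seq_convex :: "seq set \<Rightarrow> bool" where
  "seq_convex V \<longleftrightarrow> (\<forall>x\<in>V. \<forall>y\<in>V. \<forall>t::real. 0 \<le> t \<and> t \<le> 1 \<longrightarrow>
      seq_add (seq_smult (complex_of_real t) x) (seq_smult (complex_of_real (1 - t)) y) \<in> V)"

definition tvs_cauchy :: "seq topology \<Rightarrow> (nat \<Rightarrow> seq) \<Rightarrow> bool" where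
  "tvs_cauchy T s \<longleftrightarrow> (\<forall>n. s n \<in> topspace T) \<and>
     (\<forall>U. openin T U \<and> zero_seq \<in> U \<longrightarrow>
        (\<exists>N. \<forall>m\<ge>N. \<forall>n\<ge>N. seq_diff (s m) (s n) \<in> U))"

definition FK_space :: "seq set \<Rightarrow> seq topology \<Rightarrow> bool" where
  "FK_space X T \<longleftrightarrow>
     is_subspace X \<and> topspace T = X \<and>
     continuous_map (prod_topology T T) T (\<lambda>(x, y). seq_add x y) \<and>
     continuous_map (prod_topology (euclidean :: complex topology) T) T (\<lambda>(c, x). seq_smult c x) \<and>
     (\<forall>U. openin T U \<and> zero_seq \<in> U \<longrightarrow>
        (\<exists>V. openin T V \<and> zero_seq \<in> V \<and> seq_convex V \<and> V \<subseteq> U)) \<and>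
     metrizable_space T \<and>
     (\<forall>s. tvs_cauchy T s \<longrightarrow> (\<exists>x\<in>X. limitin T s x sequentially)) \<and>
     (\<forall>j. continuous_map T (euclidean :: complex topology) (\<lambda>x. x j))"

definition cdual :: "seq set \<Rightarrow> seq topology \<Rightarrow> (seq \<Rightarrow> complex) set" where
  "cdual X T = {f. (\<forall>x\<in>X. \<forall>y\<in>X. f (seq_add x y) = f x + f y) \<and>
                   (\<forall>c. \<forall>x\<in>X. f (seq_smult c x) = c * f x) \<and>
                   continuous_map T (euclidean :: complex topology) f}"

definition avg_section :: "(nat \<Rightarrow> nat) \<Rightarrow> (nat \<Rightarrow> nat) \<Rightarrow> seq \<Rightarrow> nat \<Rightarrow> seq" where
  "avg_section p q x n = (\<lambda>i. (\<Sum>k\<in>{p n + 1..q n}. sec x k i) / of_nat (q n - p n))"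

definition has_sigma_K :: "(nat \<Rightarrow> nat) \<Rightarrow> (nat \<Rightarrow> nat) \<Rightarrow> seq topology \<Rightarrow> seq set \<Rightarrow> bool" where
  "has_sigma_K p q T Y \<longleftrightarrow> (\<forall>x\<in>Y. limitin T (avg_section p q x) x sequentially)"

definition sigma_s :: "(nat \<Rightarrow> nat) \<Rightarrow> (nat \<Rightarrow> nat) \<Rightarrow> seq set" where
  "sigma_s p q = {x. convergent (\<lambda>n. (\<Sum>k\<in>{p n + 1..q n}. \<Sum>j<k. x j) / of_nat (q n - p n))}"

definition d_dual :: "(nat \<Rightarrow> nat) \<Rightarrow> (nat \<Rightarrow> nat) \<Rightarrow> seq set \<Rightarrow> seq set" where
  "d_dual p q E = {x. \<forall>y\<in>E. (\<lambda>n. x n * y n) \<in> sigma_s p q}"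

definition DF_plus :: "(nat \<Rightarrow> nat) \<Rightarrow> (nat \<Rightarrow> nat) \<Rightarrow> seq set \<Rightarrow> seq topology \<Rightarrow> seq set" where
  "DF_plus p q X T = {x. \<forall>f\<in>cdual X T.
      convergent (\<lambda>n. (\<Sum>k\<in>{p n + 1..q n}. \<Sum>j<k. x j * f (delta j)) / of_nat (q n - p n))}"

end

theory Submission
  imports Defs
begin

lemma seq_ops_simps:
  "seq_add x y j = x j + y j" "seq_smult c x j = c * x j" "seq_diff x y j = x j - y j"
  "zero_seq j = 0"
  by (auto simp: seq_add_def seq_smult_def seq_diff_def zero_seq_def)

locale fk =
  fixes X :: "seq set" and T :: "seq topology"
  assumes fk: "FK_space X T"
begin

lemma topX[simp]: "topspace T = X" using fk by (simp add: FK_space_def)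
lemma sub: "is_subspace X" using fk by (simp add: FK_space_def)
lemma zero_in[simp]: "zero_seq \<in> X" using sub by (simp add: is_subspace_def)
lemma add_in: "x \<in> X \<Longrightarrow> y \<in> X \<Longrightarrow> seq_add x y \<in> X" using sub by (simp add: is_subspace_def)
lemma sm_in: "x \<in> X \<Longrightarrow> seq_smult c x \<in> X" using sub by (simp add: is_subspace_def)
lemma diff_eq: "seq_diff x y = seq_add x (seq_smult (-1) y)"
  by (auto simp: seq_add_def seq_smult_def seq_diff_def)
lemma diff_in: "x \<in> X \<Longrightarrow> y \<in> X \<Longrightarrow> seq_diff x y \<in> X"
  by (simp add: diff_eq add_in sm_in)
lemma cont_add: "continuous_map (prod_topology T T) T (\<lambda>(x, y). seq_add x y)"
  using fk by (simp add: FK_space_def)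
lemma cont_smult: "continuous_map (prod_topology euclidean T) T (\<lambda>(c, x). seq_smult c x)"
  using fk by (simp add: FK_space_def)
lemma cont_coord: "continuous_map T euclidean (\<lambda>x. x j)"
  using fk by (simp add: FK_space_def)
lemma lconv: "openin T U \<Longrightarrow> zero_seq \<in> U \<Longrightarrow> \<exists>V. openin T V \<and> zero_seq \<in> V \<and> seq_convex V \<and> V \<subseteq> U"
  using fk by (simp add: FK_space_def)
lemma metr: "metrizable_space T"
  using fk by (simp add: FK_space_def)
lemma compl: "tvs_cauchy T s \<Longrightarrow> \<exists>x\<in>X. limitin T s x sequentially"
  using fk by (simp add: FK_space_def)

lemma cont_addl: "a \<in> X \<Longrightarrow> continuous_map T T (\<lambda>z. seq_add a z)"
proof -
  assume a: "a \<in> X"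
  have "continuous_map T (prod_topology T T) (\<lambda>z. (a, z))"
    using a by (intro continuous_map_pairedI) auto
  from continuous_map_compose[OF this cont_add] show ?thesis by (simp add: o_def)
qed

lemma cont_sm: "continuous_map T T (\<lambda>z. seq_smult c z)"
proof -
  have "continuous_map T (prod_topology euclidean T) (\<lambda>z. (c, z))"
    by (intro continuous_map_pairedI) auto
  from continuous_map_compose[OF this cont_smult] show ?thesis by (simp add: o_def)
qed

lemma cont_scal: "z \<in> X \<Longrightarrow> continuous_map euclidean T (\<lambda>c. seq_smult c z)"
proof -
  assume z: "z \<in> X"
  have "continuous_map euclidean (prod_topology euclidean T) (\<lambda>c. (c, z))"
    using z by (intro continuous_map_pairedI) auto
  from continuous_map_compose[OF this cont_smult] show ?thesis by (simp add: o_def)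
qed

lemma cont_diff: "continuous_map (prod_topology T T) T (\<lambda>(x, y). seq_diff x y)"
proof -
  have "continuous_map (prod_topology T T) T (\<lambda>xy. seq_smult (-1) (snd xy))"
    using continuous_map_compose[OF continuous_map_snd cont_sm] by (simp add: o_def)
  then have "continuous_map (prod_topology T T) (prod_topology T T) (\<lambda>xy. (fst xy, seq_smult (-1) (snd xy)))"
    using continuous_map_fst by (intro continuous_map_pairedI) auto
  then have "continuous_map (prod_topology T T) (prod_topology T T) (\<lambda>(x, y). (x, seq_smult (-1) y))"
    by (simp add: case_prod_unfold)
  from continuous_map_compose[OF this cont_add] show ?thesis
    by (simp add: o_def diff_eq case_prod_unfold)
qed

lemma cont_diffr: "a \<in> X \<Longrightarrow> continuous_map T T (\<lambda>z. seq_diff z a)"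
proof -
  assume a: "a \<in> X"
  have "continuous_map T (prod_topology T T) (\<lambda>z. (z, a))"
    using a by (intro continuous_map_pairedI) auto
  from continuous_map_compose[OF this cont_diff] show ?thesis by (simp add: o_def)
qed

lemma diff_zero: "seq_diff x x = zero_seq"
  by (auto simp: seq_diff_def zero_seq_def)

lemma small_diff:
  assumes "openin T U" "zero_seq \<in> U"
  shows "\<exists>V. openin T V \<and> zero_seq \<in> V \<and> (\<forall>v\<in>V. \<forall>w\<in>V. seq_diff v w \<in> U)"
proof -
  let ?S = "{xy \<in> topspace (prod_topology T T). (\<lambda>(x, y). seq_diff x y) xy \<in> U}"
  have op: "openin (prod_topology T T) ?S"
    by (rule openin_continuous_map_preimage[OF cont_diff assms(1)])
  have mem: "(zero_seq, zero_seq) \<in> ?S" using assms diff_zero by simp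
  obtain A B where AB: "openin T A" "openin T B" "zero_seq \<in> A" "zero_seq \<in> B" "A \<times> B \<subseteq> ?S"
    using openin_prod_topology_alt[THEN iffD1, OF op, rule_format, OF mem] by blast
  show ?thesis
  proof (intro exI conjI ballI)
    show "openin T (A \<inter> B)" using AB by blast
    show "zero_seq \<in> A \<inter> B" using AB by blast
    fix v w assume "v \<in> A \<inter> B" "w \<in> A \<inter> B"
    then have "(v, w) \<in> ?S" using AB(5) by blast
    then show "seq_diff v w \<in> U" by simp
  qed
qed

lemma regular: "regular_space T"
  using metr metrizable_imp_regular_space by blast

lemma reg_nbhd:
  assumes "openin T W" "x \<in> W"
  shows "\<exists>U C. openin T U \<and> closedin T C \<and> x \<in> U \<and> U \<subseteq> C \<and> C \<subseteq> W"
proof -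
  have "neighbourhood_base_of (closedin T) T"
    using regular neighbourhood_base_of_closedin by blast
  then show ?thesis using assms unfolding neighbourhood_base_of by blast
qed

lemma countable_base0:
  "\<exists>B::nat \<Rightarrow> seq set. (\<forall>k. openin T (B k) \<and> zero_seq \<in> B k) \<and>
      (\<forall>U. openin T U \<and> zero_seq \<in> U \<longrightarrow> (\<exists>k. B k \<subseteq> U))"
proof -
  obtain M d where md: "Metric_space M d" "T = Metric_space.mtopology M d"
    using metr unfolding metrizable_space_def by blast
  interpret Metric_space M d by fact
  have "topspace T = M" using md(2) by simp
  then have MX: "M = X" by simp
  show ?thesis
  proof (rule exI[of _ "\<lambda>k. mball zero_seq (1 / Suc k)"], intro conjI allI impI)
    fix k
    show "openin T (mball zero_seq (1 / Suc k))" using md by simp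
    have "zero_seq \<in> M" using MX by simp
    then show "zero_seq \<in> mball zero_seq (1 / Suc k)" by simp
  next
    fix U assume U: "openin T U \<and> zero_seq \<in> U"
    have "openin mtopology U" using U md(2) by simp
    then obtain r where r: "r > 0" "mball zero_seq r \<subseteq> U"
      using U unfolding openin_mtopology by blast
    obtain k where k: "1 / Suc k < r" using nat_approx_posE[OF r(1)] by blast
    have "mball zero_seq (1 / Suc k) \<subseteq> mball zero_seq r"
      using k by (intro mball_subset_concentric) auto
    then show "\<exists>k. mball zero_seq (1 / Suc k) \<subseteq> U" using r by blast
  qed
qed

end

context fk begin

lemma diff_diff_cancel: "seq_diff (seq_diff a c) (seq_diff b c) = seq_diff a b"
  by (auto simp: seq_diff_def)

lemma baire:
  fixes E :: "nat \<Rightarrow> seq set"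
  assumes Ycl: "closedin T Y"
    and Ecl: "\<And>m. closedin T (E m)" and cover: "Y \<subseteq> (\<Union>m. E m)"
    and Yne: "Y \<noteq> {}"
  shows "\<exists>m z0 G. openin T G \<and> z0 \<in> G \<and> z0 \<in> Y \<and> G \<inter> Y \<subseteq> E m"
proof (rule ccontr)
  assume H: "\<not> ?thesis"
  have H': "\<exists>z \<in> G \<inter> Y. z \<notin> E m" if "openin T G" "G \<inter> Y \<noteq> {}" for m G
    using H that by blast
  from countable_base0 obtain B :: "nat \<Rightarrow> seq set" where B1: "\<forall>k. openin T (B k) \<and> zero_seq \<in> B k"
    and B2: "\<forall>U. openin T U \<and> zero_seq \<in> U \<longrightarrow> (\<exists>k. B k \<subseteq> U)" by blast
  have B: "\<And>k. openin T (B k)" "\<And>k. zero_seq \<in> B k"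
    "\<And>U. openin T U \<Longrightarrow> zero_seq \<in> U \<Longrightarrow> \<exists>k. B k \<subseteq> U"
    using B1 B2 by auto
  have "\<forall>k. \<exists>V. openin T V \<and> zero_seq \<in> V \<and> (\<forall>v\<in>V. \<forall>w\<in>V. seq_diff v w \<in> B k)"
    using small_diff B by blast
  from choice[OF this] obtain V where V0: "\<forall>k. openin T (V k) \<and> zero_seq \<in> V k \<and> (\<forall>v\<in>V k. \<forall>w\<in>V k. seq_diff v w \<in> B k)"
    by blast
  have V: "\<And>k. openin T (V k)" "\<And>k. zero_seq \<in> V k"
    "\<And>k v w. v \<in> V k \<Longrightarrow> w \<in> V k \<Longrightarrow> seq_diff v w \<in> B k"
    using V0 by auto
  have YX: "Y \<subseteq> X" using Ycl closedin_subset by fastforce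
  define P where "P n s \<longleftrightarrow> openin T (snd s) \<and> fst s \<in> snd s \<and> fst s \<in> Y \<and> snd s \<inter> E n = {}"
    for n and s :: "seq \<times> seq set"
  define Q where "Q n s s' \<longleftrightarrow> (\<exists>C. closedin T C \<and> snd s' \<subseteq> C \<and> C \<subseteq> snd s \<and>
       (\<forall>z\<in>C. seq_diff z (fst s) \<in> V n))" for n and s s' :: "seq \<times> seq set"
  have "\<exists>s. \<forall>n. P n (s n) \<and> Q n (s n) (s (Suc n))"
  proof (rule dependent_nat_choice)
    have "X \<inter> Y \<noteq> {}" using YX Yne by blast
    then obtain z where z: "z \<in> X \<inter> Y" "z \<notin> E 0"
      using H'[of X 0] openin_topspace[of T] by auto
    have "openin T (X - E 0)" using Ecl[of 0] openin_diff[OF openin_topspace[of T]] by simp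
    then have "P 0 (z, X - E 0)" using z unfolding P_def by auto
    then show "\<exists>x. P 0 x" by blast
  next
    fix s n assume Ps: "P n s"
    obtain y0 G where s: "s = (y0, G)" by (cases s) blast
    have G: "openin T G" "y0 \<in> G" "y0 \<in> Y" using Ps s unfolding P_def by auto
    have y0X: "y0 \<in> X" using G YX by blast
    define W where "W = G \<inter> {z \<in> topspace T. seq_diff z y0 \<in> V n}"
    have Wo: "openin T W" unfolding W_def
      by (intro openin_Int G(1) openin_continuous_map_preimage[OF cont_diffr[OF y0X] V(1)])
    have "y0 \<in> W" unfolding W_def using G y0X V(2) diff_zero by auto
    then obtain N C where NC: "openin T N" "closedin T C" "y0 \<in> N" "N \<subseteq> C" "C \<subseteq> W"
      using reg_nbhd[OF Wo] by blast
    have "N \<inter> Y \<noteq> {}" using NC G by blast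
    then obtain z where z: "z \<in> N \<inter> Y" "z \<notin> E (Suc n)" using H'[OF NC(1)] by blast
    have "openin T (N - E (Suc n))" using NC(1) Ecl by (simp add: openin_diff)
    then have "P (Suc n) (z, N - E (Suc n))" using z unfolding P_def by auto
    moreover have "Q n s (z, N - E (Suc n))" unfolding Q_def s
      using NC unfolding W_def by (intro exI[of _ C]) auto
    ultimately show "\<exists>s'. P (Suc n) s' \<and> Q n s s'" by blast
  qed
  then obtain s :: "nat \<Rightarrow> seq \<times> seq set" where s: "\<And>n. P n (s n)" "\<And>n. Q n (s n) (s (Suc n))" by blast
  define y where "y n = fst (s n)" for n
  define G where "G n = snd (s n)" for n
  have PO: "openin T (G n)" "y n \<in> G n" "y n \<in> Y" "G n \<inter> E n = {}" for n
    using s(1)[of n] unfolding P_def y_def G_def by auto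
  have "\<forall>n. \<exists>C. closedin T C \<and> G (Suc n) \<subseteq> C \<and> C \<subseteq> G n \<and> (\<forall>z\<in>C. seq_diff z (y n) \<in> V n)"
    using s(2) unfolding Q_def y_def G_def by blast
  from choice[OF this] obtain C where C0: "\<forall>n. closedin T (C n) \<and> G (Suc n) \<subseteq> C n \<and> C n \<subseteq> G n \<and> (\<forall>z\<in>C n. seq_diff z (y n) \<in> V n)"
    by blast
  have C: "\<And>n. closedin T (C n)" "\<And>n. G (Suc n) \<subseteq> C n" "\<And>n. C n \<subseteq> G n"
    "\<And>n z. z \<in> C n \<Longrightarrow> seq_diff z (y n) \<in> V n"
    using C0 by auto
  have decO: "G m \<subseteq> G n" if "n \<le> m" for m n
    using that
  proof (induction m rule: dec_induct)
    case base then show ?case by simp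
  next
    case (step m) then show ?case using C(2)[of m] C(3)[of m] by blast
  qed
  have inC: "y m \<in> C n" if "n < m" for m n
    using decO[of "Suc n" m] that PO(2)[of m] C(2)[of n] by auto
  have dV: "seq_diff (y m) (y n) \<in> V n" if "n \<le> m" for m n
  proof (cases "n = m")
    case True then show ?thesis using V(2) diff_zero by simp
  next
    case False then show ?thesis using inC[of n m] that C(4) by simp
  qed
  have yX: "y n \<in> X" for n using PO(3) YX by blast
  have "tvs_cauchy T y"
    unfolding tvs_cauchy_def
  proof (intro conjI allI impI)
    fix n show "y n \<in> topspace T" using yX by simp
  next
    fix U assume "openin T U \<and> zero_seq \<in> U"
    then obtain k where k: "B k \<subseteq> U" using B(3) by blast
    show "\<exists>N. \<forall>m\<ge>N. \<forall>n\<ge>N. seq_diff (y m) (y n) \<in> U"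
    proof (intro exI allI impI)
      fix m n assume "k \<le> m" "k \<le> n"
      then have "seq_diff (seq_diff (y m) (y k)) (seq_diff (y n) (y k)) \<in> B k"
        using dV V(3) by blast
      then show "seq_diff (y m) (y n) \<in> U" using k diff_diff_cancel by auto
    qed
  qed
  then obtain l where l: "l \<in> X" "limitin T y l sequentially" using compl by blast
  have lY: "l \<in> Y"
    by (rule limitin_closedin[OF l(2) Ycl]) (use PO(3) in auto)
  have lC: "l \<in> C n" for n
  proof (rule limitin_closedin[OF l(2) C(1)])
    show "\<forall>\<^sub>F x in sequentially. y x \<in> C n"
      unfolding eventually_sequentially using inC by (intro exI[of _ "Suc n"]) auto
  qed auto
  have "l \<notin> E n" for n using lC[of n] C(3)[of n] PO(4)[of n] by blast
  then show False using lY cover by blast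
qed

end

abbreviation rs :: "real \<Rightarrow> seq \<Rightarrow> seq" where
  "rs t x \<equiv> seq_smult (complex_of_real t) x"

lemma seq_eqI: "(\<And>i. (x::seq) i = y i) \<Longrightarrow> x = y" by (rule ext)

locale hb =
  fixes X Y :: "seq set" and p h :: "seq \<Rightarrow> real"
  assumes addX: "\<And>x y. x \<in> X \<Longrightarrow> y \<in> X \<Longrightarrow> seq_add x y \<in> X"
    and smX: "\<And>x t. x \<in> X \<Longrightarrow> rs t x \<in> X"
    and YX: "Y \<subseteq> X" and zY: "zero_seq \<in> Y"
    and addY: "\<And>x y. x \<in> Y \<Longrightarrow> y \<in> Y \<Longrightarrow> seq_add x y \<in> Y"
    and smY: "\<And>x t. x \<in> Y \<Longrightarrow> rs t x \<in> Y"
    and p_add: "\<And>x y. x \<in> X \<Longrightarrow> y \<in> X \<Longrightarrow> p (seq_add x y) \<le> p x + p y"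
    and p_hom: "\<And>x t. x \<in> X \<Longrightarrow> t > 0 \<Longrightarrow> p (rs t x) = t * p x"
    and h_add: "\<And>x y. x \<in> Y \<Longrightarrow> y \<in> Y \<Longrightarrow> h (seq_add x y) = h x + h y"
    and h_hom: "\<And>x t. x \<in> Y \<Longrightarrow> h (rs t x) = t * h x"
    and h_le: "\<And>x. x \<in> Y \<Longrightarrow> h x \<le> p x"
begin

definition good :: "(seq \<times> real) set \<Rightarrow> bool" where
  "good G \<longleftrightarrow> (\<forall>u a b. (u, a) \<in> G \<longrightarrow> (u, b) \<in> G \<longrightarrow> a = b) \<and>
     (\<forall>u a. (u, a) \<in> G \<longrightarrow> u \<in> X) \<and>
     (\<forall>u\<in>Y. (u, h u) \<in> G) \<and>
     (\<forall>u a v b. (u, a) \<in> G \<longrightarrow> (v, b) \<in> G \<longrightarrow> (seq_add u v, a + b) \<in> G) \<and>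
     (\<forall>u a t. (u, a) \<in> G \<longrightarrow> (rs t u, t * a) \<in> G) \<and>
     (\<forall>u a. (u, a) \<in> G \<longrightarrow> a \<le> p u)"

lemma goodD:
  assumes "good G"
  shows "\<And>u a b. (u, a) \<in> G \<Longrightarrow> (u, b) \<in> G \<Longrightarrow> a = b"
    "\<And>u a. (u, a) \<in> G \<Longrightarrow> u \<in> X"
    "\<And>u. u \<in> Y \<Longrightarrow> (u, h u) \<in> G"
    "\<And>u a v b. (u, a) \<in> G \<Longrightarrow> (v, b) \<in> G \<Longrightarrow> (seq_add u v, a + b) \<in> G"
    "\<And>u a t. (u, a) \<in> G \<Longrightarrow> (rs t u, t * a) \<in> G"
    "\<And>u a. (u, a) \<in> G \<Longrightarrow> a \<le> p u"
  using assms unfolding good_def by blast+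

lemma good_zero: "good G \<Longrightarrow> (zero_seq, 0) \<in> G"
proof -
  assume g: "good G"
  have "(rs 0 zero_seq, 0 * h zero_seq) \<in> G" using goodD(3,5)[OF g] zY by blast
  moreover have "rs 0 zero_seq = zero_seq" by (auto simp: seq_smult_def zero_seq_def)
  ultimately show ?thesis by simp
qed

lemma good_h: "good {(u, h u) | u. u \<in> Y}"
  unfolding good_def
proof (intro conjI allI impI ballI)
  fix u a v b assume "(u, a) \<in> {(u, h u) |u. u \<in> Y}" "(v, b) \<in> {(u, h u) |u. u \<in> Y}"
  then show "(seq_add u v, a + b) \<in> {(u, h u) |u. u \<in> Y}"
    using h_add addY by auto
next
  fix u a t assume "(u, a) \<in> {(u, h u) |u. u \<in> Y}"
  then show "(rs t u, t * a) \<in> {(u, h u) |u. u \<in> Y}"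
    using h_hom smY by auto
qed (use YX h_le in auto)

lemma extend:
  assumes g: "good G" and x0: "x0 \<in> X" and nx: "\<forall>a. (x0, a) \<notin> G"
  shows "\<exists>G'. good G' \<and> G \<subseteq> G' \<and> G' \<noteq> G"
proof -
  note gd = goodD[OF g]
  define S where "S = {b - p (seq_add w (rs (-1) x0)) | w b. (w, b) \<in> G}"
  define c where "c = Sup S"
  have key: "b - p (seq_add w (rs (-1) x0)) \<le> p (seq_add v x0) - a"
    if "(v, a) \<in> G" "(w, b) \<in> G" for v a w b
  proof -
    have vX: "v \<in> X" and wX: "w \<in> X" using that gd(2) by auto
    have "a + b \<le> p (seq_add v w)" using gd(4,6) that by blast
    also have "seq_add v w = seq_add (seq_add v x0) (seq_add w (rs (-1) x0))"
      by (rule seq_eqI) (simp add: seq_add_def seq_smult_def)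
    also have "p \<dots> \<le> p (seq_add v x0) + p (seq_add w (rs (-1) x0))"
      using vX wX x0 by (intro p_add addX smX)
    finally show ?thesis by simp
  qed
  have Sne: "S \<noteq> {}" unfolding S_def using good_zero[OF g] by blast
  have Sbdd: "bdd_above S" unfolding S_def bdd_above_def
    using key[OF good_zero[OF g]] by blast
  have c_ge: "b - p (seq_add w (rs (-1) x0)) \<le> c" if "(w, b) \<in> G" for w b
    unfolding c_def by (rule cSup_upper[OF _ Sbdd]) (use that S_def in blast)
  have c_le: "c \<le> p (seq_add v x0) - a" if "(v, a) \<in> G" for v a
    unfolding c_def by (rule cSup_least[OF Sne]) (use key[OF that] S_def in blast)
  define G' where "G' = {(seq_add u (rs t x0), a + t * c) | u a t. (u, a) \<in> G}"
  have rs0: "seq_add u (rs 0 x0) = u" for u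
    by (rule seq_eqI) (simp add: seq_add_def seq_smult_def)
  have sub: "G \<subseteq> G'"
  proof
    fix z assume "z \<in> G"
    then obtain u a where z: "z = (u, a)" "(u, a) \<in> G" by (cases z) auto
    then have "(seq_add u (rs 0 x0), a + 0 * c) \<in> G'" unfolding G'_def by blast
    then show "z \<in> G'" using z rs0 by simp
  qed
  have x0G': "(x0, c) \<in> G'"
  proof -
    have "(seq_add zero_seq (rs 1 x0), 0 + 1 * c) \<in> G'"
      unfolding G'_def using good_zero[OF g] by blast
    moreover have "seq_add zero_seq (rs 1 x0) = x0"
      by (rule seq_eqI) (simp add: seq_add_def seq_smult_def zero_seq_def)
    ultimately show ?thesis by simp
  qed
  have neq: "G' \<noteq> G" using x0G' nx by blast
  have "good G'"
    unfolding good_def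
  proof (intro conjI allI impI ballI)
    fix z a b assume A: "(z, a) \<in> G'" "(z, b) \<in> G'"
    then obtain u a1 t where u: "z = seq_add u (rs t x0)" "a = a1 + t * c" "(u, a1) \<in> G"
      unfolding G'_def by blast
    obtain v b1 s where v: "z = seq_add v (rs s x0)" "b = b1 + s * c" "(v, b1) \<in> G"
      using A unfolding G'_def by blast
    have ts: "t = s"
    proof (rule ccontr)
      assume "t \<noteq> s"
      have "(seq_add u (rs (-1) v), a1 + (-1) * b1) \<in> G" using gd(4,5) u(3) v(3) by blast
      then have "(rs (1 / (s - t)) (seq_add u (rs (-1) v)), (1 / (s - t)) * (a1 + (-1) * b1)) \<in> G"
        using gd(5) by blast
      moreover have "rs (1 / (s - t)) (seq_add u (rs (-1) v)) = x0"
      proof (rule seq_eqI)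
        fix i
        have "u i + complex_of_real t * x0 i = v i + complex_of_real s * x0 i"
          using u(1) v(1) by (metis seq_ops_simps(1,2))
        then have "u i - v i = complex_of_real (s - t) * x0 i" by (simp add: algebra_simps)
        moreover have "complex_of_real (s - t) \<noteq> 0" using \<open>t \<noteq> s\<close> by simp
        ultimately show "rs (1 / (s - t)) (seq_add u (rs (-1) v)) i = x0 i"
          by (simp add: seq_add_def seq_smult_def field_simps)
      qed
      ultimately show False using nx by auto
    qed
    have "u = v"
    proof (rule seq_eqI)
      fix i
      have "u i + complex_of_real t * x0 i = v i + complex_of_real s * x0 i"
        using u(1) v(1) by (metis seq_ops_simps(1,2))
      then show "u i = v i" using ts by simp
    qed
    then show "a = b" using u v ts gd(1) by blast
  next
    fix z a assume "(z, a) \<in> G'"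
    then obtain u a1 t where u: "z = seq_add u (rs t x0)" "(u, a1) \<in> G"
      unfolding G'_def by blast
    then show "z \<in> X" using gd(2) x0 addX smX by blast
  next
    fix u assume "u \<in> Y" then show "(u, h u) \<in> G'" using sub gd(3) by blast
  next
    fix z a w b assume A: "(z, a) \<in> G'" "(w, b) \<in> G'"
    then obtain u a1 t where u: "z = seq_add u (rs t x0)" "a = a1 + t * c" "(u, a1) \<in> G"
      unfolding G'_def by blast
    obtain v b1 s where v: "w = seq_add v (rs s x0)" "b = b1 + s * c" "(v, b1) \<in> G"
      using A unfolding G'_def by blast
    have "(seq_add (seq_add u v) (rs (t + s) x0), (a1 + b1) + (t + s) * c) \<in> G'"
      unfolding G'_def using gd(4)[OF u(3) v(3)] by blast
    moreover have "seq_add (seq_add u v) (rs (t + s) x0) = seq_add z w"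
      unfolding u v by (rule seq_eqI) (simp add: seq_add_def seq_smult_def algebra_simps)
    moreover have "(a1 + b1) + (t + s) * c = a + b" unfolding u v by (simp add: algebra_simps)
    ultimately show "(seq_add z w, a + b) \<in> G'" by simp
  next
    fix z a r assume "(z, a) \<in> G'"
    then obtain u a1 t where u: "z = seq_add u (rs t x0)" "a = a1 + t * c" "(u, a1) \<in> G"
      unfolding G'_def by blast
    have "(seq_add (rs r u) (rs (r * t) x0), r * a1 + (r * t) * c) \<in> G'"
      unfolding G'_def using gd(5)[OF u(3)] by blast
    moreover have "seq_add (rs r u) (rs (r * t) x0) = rs r z"
      unfolding u by (rule seq_eqI) (simp add: seq_add_def seq_smult_def algebra_simps)
    moreover have "r * a1 + (r * t) * c = r * a" unfolding u by (simp add: algebra_simps)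
    ultimately show "(rs r z, r * a) \<in> G'" by simp
  next
    fix z a assume "(z, a) \<in> G'"
    then obtain u a1 t where u: "z = seq_add u (rs t x0)" "a = a1 + t * c" "(u, a1) \<in> G"
      unfolding G'_def by blast
    have uX: "u \<in> X" using gd(2) u(3) by blast
    consider "t = 0" | "t > 0" | "t < 0" by linarith
    then show "a \<le> p z"
    proof cases
      case 1 then show ?thesis using u gd(6) rs0 by simp
    next
      case 2
      have m: "(rs (1 / t) u, (1 / t) * a1) \<in> G" using gd(5) u(3) by blast
      have "c \<le> p (seq_add (rs (1 / t) u) x0) - (1 / t) * a1" using c_le[OF m] .
      then have "t * c \<le> t * p (seq_add (rs (1 / t) u) x0) - a1"
        using 2 by (simp add: field_simps)
      also have "t * p (seq_add (rs (1 / t) u) x0) = p (rs t (seq_add (rs (1 / t) u) x0))"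
        by (rule p_hom[OF addX[OF smX[OF uX] x0] 2, symmetric])
      also have "rs t (seq_add (rs (1 / t) u) x0) = z"
        unfolding u(1) using 2
        by (intro seq_eqI) (simp add: seq_add_def seq_smult_def field_simps)
      finally show ?thesis using u(2) by simp
    next
      case 3
      define s where "s = - t"
      have s: "s > 0" using 3 s_def by simp
      have m: "(rs (1 / s) u, (1 / s) * a1) \<in> G" using gd(5) u(3) by blast
      have "(1 / s) * a1 - p (seq_add (rs (1 / s) u) (rs (-1) x0)) \<le> c" using c_ge[OF m] .
      then have "a1 - s * p (seq_add (rs (1 / s) u) (rs (-1) x0)) \<le> s * c"
        using s by (simp add: field_simps)
      also have "s * p (seq_add (rs (1 / s) u) (rs (-1) x0)) = p (rs s (seq_add (rs (1 / s) u) (rs (-1) x0)))"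
        by (rule p_hom[OF addX[OF smX[OF uX] smX[OF x0]] s, symmetric])
      also have "rs s (seq_add (rs (1 / s) u) (rs (-1) x0)) = z"
        unfolding u(1) s_def using 3
        by (intro seq_eqI) (simp add: seq_add_def seq_smult_def field_simps)
      finally show ?thesis using u(2) s_def by simp
    qed
  qed
  then show ?thesis using sub neq by blast
qed

theorem hahn_banach:
  "\<exists>F. (\<forall>x\<in>X. \<forall>y\<in>X. F (seq_add x y) = F x + F y) \<and> (\<forall>t. \<forall>x\<in>X. F (rs t x) = t * F x)
     \<and> (\<forall>x\<in>X. F x \<le> p x) \<and> (\<forall>x\<in>Y. F x = h x)"
proof -
  define A where "A = {G. good G}"
  have "\<forall>C\<in>chains A. \<exists>U\<in>A. \<forall>G\<in>C. G \<subseteq> U"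
  proof
    fix C assume C: "C \<in> chains A"
    show "\<exists>U\<in>A. \<forall>G\<in>C. G \<subseteq> U"
    proof (cases "C = {}")
      case True then show ?thesis using good_h A_def by blast
    next
      case False
      have CA: "\<And>G. G \<in> C \<Longrightarrow> good G" using C unfolding chains_def A_def by blast
      have ch: "\<And>G1 G2. G1 \<in> C \<Longrightarrow> G2 \<in> C \<Longrightarrow> G1 \<subseteq> G2 \<or> G2 \<subseteq> G1"
        using C unfolding chains_def chain_subset_def by blast
      have two: "\<exists>G\<in>C. z1 \<in> G \<and> z2 \<in> G" if zz: "z1 \<in> \<Union>C" "z2 \<in> \<Union>C" for z1 z2
      proof -
        obtain G1 G2 where "G1 \<in> C" "G2 \<in> C" "z1 \<in> G1" "z2 \<in> G2" using zz by blast
        then show ?thesis using ch[of G1 G2] by blast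
      qed
      obtain G0 where G0: "G0 \<in> C" using False by blast
      have "good (\<Union>C)"
        unfolding good_def
      proof (intro conjI allI impI ballI)
        fix u a b assume "(u, a) \<in> \<Union>C" "(u, b) \<in> \<Union>C"
        then obtain G where "G \<in> C" "(u, a) \<in> G" "(u, b) \<in> G" using two by blast
        then show "a = b" using CA goodD(1) by blast
      next
        fix u a assume "(u, a) \<in> \<Union>C"
        then show "u \<in> X" using CA goodD(2) by blast
      next
        fix u assume "u \<in> Y" then show "(u, h u) \<in> \<Union>C" using G0 CA goodD(3) by blast
      next
        fix u a v b assume "(u, a) \<in> \<Union>C" "(v, b) \<in> \<Union>C"
        then obtain G where "G \<in> C" "(u, a) \<in> G" "(v, b) \<in> G" using two by blast
        then show "(seq_add u v, a + b) \<in> \<Union>C" using CA goodD(4) by blast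
      next
        fix u a t assume "(u, a) \<in> \<Union>C"
        then show "(rs t u, t * a) \<in> \<Union>C" using CA goodD(5) by blast
      next
        fix u a assume "(u, a) \<in> \<Union>C"
        then show "a \<le> p u" using CA goodD(6) by blast
      qed
      then show ?thesis using A_def by blast
    qed
  qed
  from Zorn_Lemma2[OF this] obtain M where M: "M \<in> A" "\<And>G. G \<in> A \<Longrightarrow> M \<subseteq> G \<Longrightarrow> G = M"
    by blast
  have gM: "good M" using M A_def by blast
  note gd = goodD[OF gM]
  have tot: "\<exists>a. (x, a) \<in> M" if xX: "x \<in> X" for x
  proof (rule ccontr)
    assume nn: "\<not> ?thesis"
    obtain G' where "good G'" "M \<subseteq> G'" "G' \<noteq> M" using extend[OF gM xX] nn by blast
    then show False using M(2) A_def by blast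
  qed
  define F where "F x = (THE a. (x, a) \<in> M)" for x
  have FM: "(x, F x) \<in> M" if xX: "x \<in> X" for x
  proof -
    obtain a where a: "(x, a) \<in> M" using tot[OF xX] by blast
    have "F x = a" unfolding F_def by (rule the_equality) (use a gd(1) in blast)+
    then show ?thesis using a by simp
  qed
  have Feq: "F x = a" if "(x, a) \<in> M" for x a
    using FM[OF gd(2)[OF that]] that gd(1) by blast
  show ?thesis
  proof (intro exI[of _ F] conjI ballI allI)
    fix x y assume "x \<in> X" "y \<in> X"
    then show "F (seq_add x y) = F x + F y" using Feq gd(4) FM by blast
  next
    fix t x assume "x \<in> X"
    then show "F (rs t x) = t * F x" using Feq gd(5) FM by blast
  next
    fix x assume "x \<in> X" then show "F x \<le> p x" using FM gd(6) by blast
  next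
    fix x assume "x \<in> Y" then show "F x = h x" using Feq gd(3) by blast
  qed
qed

end

definition gen :: "(nat \<Rightarrow> nat) \<Rightarrow> (nat \<Rightarrow> nat) \<Rightarrow> nat \<Rightarrow> seq \<Rightarrow> seq \<Rightarrow> complex" where
  "gen p q n z a = (\<Sum>k\<in>{p n + 1..q n}. \<Sum>j<k. z j * a j) / of_nat (q n - p n)"

lemma phi_iff: "x \<in> phi \<longleftrightarrow> (\<exists>N. \<forall>i\<ge>N. x i = 0)"
proof
  assume "x \<in> phi"
  then obtain F c where F: "finite F" "x = (\<lambda>i. \<Sum>j\<in>F. c j * delta j i)"
    unfolding phi_def by blast
  obtain N where N: "\<forall>j\<in>F. j < N"
    using F(1) finite_nat_bounded by blast
  have "x i = 0" if "i \<ge> N" for i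
  proof -
    have "\<forall>j\<in>F. delta j i = 0" using N that by (auto simp: delta_def)
    then show ?thesis using F(2) by simp
  qed
  then show "\<exists>N. \<forall>i\<ge>N. x i = 0" by blast
next
  assume "\<exists>N. \<forall>i\<ge>N. x i = 0"
  then obtain N where N: "\<forall>i\<ge>N. x i = 0" by blast
  have "x = (\<lambda>i. \<Sum>j\<in>{..<N}. x j * delta j i)"
  proof
    fix i
    have "(\<Sum>j\<in>{..<N}. x j * delta j i) = (\<Sum>j\<in>{..<N}. if j = i then x i else 0)"
      by (rule sum.cong) (auto simp: delta_def)
    also have "\<dots> = x i" using N by (auto simp: not_less)
    finally show "x i = (\<Sum>j\<in>{..<N}. x j * delta j i)" by simp
  qed
  then show "x \<in> phi" unfolding phi_def by blast
qed

lemma delta_phi: "delta j \<in> phi"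
  unfolding phi_iff by (rule exI[of _ "Suc j"]) (auto simp: delta_def)

lemma phi_add: "x \<in> phi \<Longrightarrow> y \<in> phi \<Longrightarrow> seq_add x y \<in> phi"
  unfolding phi_iff seq_add_def by (metis add.right_neutral max.cobounded1 max.cobounded2 order_trans)

lemma phi_sm: "x \<in> phi \<Longrightarrow> seq_smult c x \<in> phi"
  unfolding phi_iff seq_smult_def by auto

lemma zero_phi: "zero_seq \<in> phi"
  unfolding phi_iff zero_seq_def by auto

lemma lin_comb:
  assumes add: "\<And>x y. x \<in> X \<Longrightarrow> y \<in> X \<Longrightarrow> f (seq_add x y) = f x + f y"
    and sm: "\<And>c x. x \<in> X \<Longrightarrow> f (seq_smult c x) = c * f x"
    and phiX: "phi \<subseteq> X"
    and fin: "finite F"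
  shows "f (\<lambda>i. \<Sum>j\<in>F. c j * delta j i) = (\<Sum>j\<in>F. c j * f (delta j))"
  using fin
proof (induction F rule: finite_induct)
  case empty
  have "zero_seq \<in> X" using phiX zero_phi by blast
  then have "f (seq_smult 0 zero_seq) = 0" using sm by simp
  moreover have "seq_smult 0 zero_seq = (\<lambda>i. 0)" by (auto simp: seq_smult_def)
  ultimately show ?case by simp
next
  case (insert a F)
  have e: "(\<lambda>i. \<Sum>j\<in>insert a F. c j * delta j i) = seq_add (seq_smult (c a) (delta a)) (\<lambda>i. \<Sum>j\<in>F. c j * delta j i)"
    using insert by (auto simp: seq_add_def seq_smult_def)
  have m1: "seq_smult (c a) (delta a) \<in> X" using phiX phi_sm delta_phi by blast
  have m2: "(\<lambda>i. \<Sum>j\<in>F. c j * delta j i) \<in> X" using phiX insert(1) unfolding phi_def by blast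
  have "delta a \<in> X" using phiX delta_phi by blast
  then show ?case unfolding e using insert add[OF m1 m2] sm by simp
qed

lemma avg_comb:
  "avg_section p q z n = (\<lambda>i. \<Sum>j\<in>{..<q n}.
      ((\<Sum>k\<in>{p n + 1..q n}. if j < k then z j else 0) / of_nat (q n - p n)) * delta j i)"
proof
  fix i
  have r: "(\<Sum>j\<in>{..<q n}. ((\<Sum>k\<in>{p n + 1..q n}. if j < k then z j else 0) / of_nat (q n - p n)) * delta j i)
     = (\<Sum>j\<in>{..<q n}. if j = i then ((\<Sum>k\<in>{p n + 1..q n}. if i < k then z i else 0) / of_nat (q n - p n)) else 0)"
    by (rule sum.cong) (auto simp: delta_def)
  show "avg_section p q z n i = (\<Sum>j\<in>{..<q n}. ((\<Sum>k\<in>{p n + 1..q n}. if j < k then z j else 0) / of_nat (q n - p n)) * delta j i)"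
  proof (cases "i < q n")
    case True
    then show ?thesis unfolding r avg_section_def sec_def by simp
  next
    case False
    then have "(\<Sum>k\<in>{p n + 1..q n}. sec z k i) = 0" unfolding sec_def by (auto intro!: sum.neutral)
    then show ?thesis unfolding r avg_section_def using False by simp
  qed
qed

lemma f_avg:
  assumes add: "\<And>x y. x \<in> X \<Longrightarrow> y \<in> X \<Longrightarrow> f (seq_add x y) = f x + f y"
    and sm: "\<And>c x. x \<in> X \<Longrightarrow> f (seq_smult c x) = c * f x"
    and phiX: "phi \<subseteq> X"
  shows "f (avg_section p q z n) = gen p q n z (\<lambda>j. f (delta j))"
proof -
  have "f (avg_section p q z n) = (\<Sum>j\<in>{..<q n}.
      ((\<Sum>k\<in>{p n + 1..q n}. if j < k then z j else 0) / of_nat (q n - p n)) * f (delta j))"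
    unfolding avg_comb by (rule lin_comb[OF add sm phiX]) auto
  also have "\<dots> = (\<Sum>j\<in>{..<q n}. \<Sum>k\<in>{p n + 1..q n}. if j < k then z j * f (delta j) else 0) / of_nat (q n - p n)"
  proof -
    have "((\<Sum>k\<in>{p n + 1..q n}. if j < k then z j else 0) / of_nat (q n - p n)) * f (delta j)
       = (\<Sum>k\<in>{p n + 1..q n}. if j < k then z j * f (delta j) else 0) / of_nat (q n - p n)" for j
    proof -
      have "(\<Sum>k\<in>{p n + 1..q n}. if j < k then z j else 0) * f (delta j)
          = (\<Sum>k\<in>{p n + 1..q n}. if j < k then z j * f (delta j) else 0)"
        by (auto simp: sum_distrib_right intro!: sum.cong)
      then show ?thesis by (metis times_divide_eq_left)
    qed
    then show ?thesis by (simp add: sum_divide_distrib)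
  qed
  also have "(\<Sum>j\<in>{..<q n}. \<Sum>k\<in>{p n + 1..q n}. if j < k then z j * f (delta j) else 0)
      = (\<Sum>k\<in>{p n + 1..q n}. \<Sum>j\<in>{..<q n}. if j < k then z j * f (delta j) else 0)"
    by (rule sum.swap)
  also have "\<dots> = (\<Sum>k\<in>{p n + 1..q n}. \<Sum>j<k. z j * f (delta j))"
  proof (rule sum.cong[OF refl])
    fix k assume k: "k \<in> {p n + 1..q n}"
    have "(\<Sum>j\<in>{..<q n}. if j < k then z j * f (delta j) else 0) = (\<Sum>j\<in>{j \<in> {..<q n}. j < k}. z j * f (delta j))"
      by (rule sum.inter_filter[symmetric]) simp
    also have "{j \<in> {..<q n}. j < k} = {..<k}" using k by auto
    finally show "(\<Sum>j\<in>{..<q n}. if j < k then z j * f (delta j) else 0) = (\<Sum>j<k. z j * f (delta j))" .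
  qed
  finally show ?thesis unfolding gen_def .
qed

lemma gen_add: "gen p q n (seq_add a b) y = gen p q n a y + gen p q n b y"
  unfolding gen_def seq_add_def by (simp add: algebra_simps sum.distrib add_divide_distrib)

lemma gen_sm: "gen p q n (seq_smult c a) y = c * gen p q n a y"
  unfolding gen_def seq_smult_def by (simp add: sum_distrib_left mult.assoc)

lemma gen_delta: "gen p q n (delta j) y = y j * avg_section p q (delta j) n j"
proof -
  have i: "(\<Sum>i<k. delta j i * y i) = y j * sec (delta j) k j" for k
  proof -
    have "(\<Sum>i<k. delta j i * y i) = (\<Sum>i<k. if i = j then y j else 0)"
      by (rule sum.cong) (auto simp: delta_def)
    then show ?thesis by (simp add: sec_def delta_def)
  qed
  show ?thesis unfolding gen_def avg_section_def i
    by (simp add: sum_distrib_left)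
qed

lemma cm_mult_const: "continuous_map X euclidean f \<Longrightarrow> continuous_map X euclidean (\<lambda>x. f x * (c::complex))"
  by (simp add: continuous_map_atin tendsto_mult_right)

lemma (in fk) gen_cont: "continuous_map T euclidean (\<lambda>z. gen p q n z y)"
  unfolding gen_def
  by (intro cm_mult_const[where c = "1 / _", unfolded mult_1_right times_divide_eq_right]
      continuous_map_sum cm_mult_const cont_coord) auto


context fk begin

lemma cdualD:
  assumes "f \<in> cdual X T"
  shows "\<And>x y. x \<in> X \<Longrightarrow> y \<in> X \<Longrightarrow> f (seq_add x y) = f x + f y"
    "\<And>c x. x \<in> X \<Longrightarrow> f (seq_smult c x) = c * f x"
    "continuous_map T euclidean f"
  using assms unfolding cdual_def by auto

lemma partA:
  assumes phiX: "phi \<subseteq> X" and sK: "has_sigma_K p q T (T closure_of phi)"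
  shows "d_dual p q (d_dual p q (T closure_of phi)) \<subseteq> DF_plus p q X T"
proof
  fix x assume x: "x \<in> d_dual p q (d_dual p q (T closure_of phi))"
  show "x \<in> DF_plus p q X T" unfolding DF_plus_def
  proof (intro CollectI ballI)
    fix f assume f: "f \<in> cdual X T"
    note fd = cdualD[OF f]
    have u: "(\<lambda>j. f (delta j)) \<in> d_dual p q (T closure_of phi)"
      unfolding d_dual_def sigma_s_def
    proof (intro CollectI ballI)
      fix z assume z: "z \<in> T closure_of phi"
      have "limitin T (avg_section p q z) z sequentially" using sK z unfolding has_sigma_K_def by blast
      from continuous_map_limit[OF fd(3) this] have "(f \<circ> avg_section p q z) \<longlonglongrightarrow> f z" by simp
      moreover have "(f \<circ> avg_section p q z) = (\<lambda>n. gen p q n z (\<lambda>j. f (delta j)))"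
        using f_avg[OF fd(1) fd(2) phiX] by (auto simp: o_def)
      ultimately have "convergent (\<lambda>n. gen p q n z (\<lambda>j. f (delta j)))" by (auto simp: convergent_def)
      then show "convergent (\<lambda>n. (\<Sum>k\<in>{p n + 1..q n}. \<Sum>j<k. f (delta j) * z j) / of_nat (q n - p n))"
        unfolding gen_def by (simp add: mult.commute)
    qed
    have xb: "\<forall>y \<in> d_dual p q (T closure_of phi). (\<lambda>n. x n * y n) \<in> sigma_s p q"
      using x unfolding d_dual_def[of p q "d_dual p q (T closure_of phi)"] by simp
    from bspec[OF xb u] have "(\<lambda>n. x n * f (delta n)) \<in> sigma_s p q" by simp
    then show "convergent (\<lambda>n. (\<Sum>k\<in>{p n + 1..q n}. \<Sum>j<k. x j * f (delta j)) / of_nat (q n - p n))"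
      unfolding sigma_s_def by simp
  qed
qed

lemma sm_zero: "seq_smult c zero_seq = zero_seq"
  by (auto simp: seq_smult_def zero_seq_def)

lemma bounded_cont:
  assumes fadd: "\<And>x y. x \<in> X \<Longrightarrow> y \<in> X \<Longrightarrow> f (seq_add x y) = f x + f y"
    and fhom: "\<And>t x. x \<in> X \<Longrightarrow> f (rs t x) = complex_of_real t * f x"
    and W: "openin T W" "zero_seq \<in> W" and bnd: "\<And>u. u \<in> W \<Longrightarrow> cmod (f u) \<le> K"
  shows "continuous_map T euclidean f"
  unfolding continuous_map_def
proof (intro conjI allI impI)
  show "f \<in> topspace T \<rightarrow> topspace euclidean" by simp
  fix U :: "complex set" assume "openin euclidean U"
  then have oU: "open U" by simp
  show "openin T {x \<in> topspace T. f x \<in> U}"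
  proof (subst openin_subopen, intro ballI)
    fix x assume x: "x \<in> {x \<in> topspace T. f x \<in> U}"
    then have xX: "x \<in> X" and fxU: "f x \<in> U" by auto
    obtain e where e: "e > 0" "ball (f x) e \<subseteq> U" using oU fxU open_contains_ball by blast
    define K' where "K' = max K 0 + 1"
    have K': "K' > 0" "K \<le> K'" unfolding K'_def by auto
    define r where "r = 2 * K' / e"
    have r: "r > 0" unfolding r_def using K' e by simp
    define N where "N = {z \<in> topspace T. rs r (seq_diff z x) \<in> W}"
    have cm: "continuous_map T T (\<lambda>z. rs r (seq_diff z x))"
      using continuous_map_compose[OF cont_diffr[OF xX] cont_sm[of "complex_of_real r"]] by (simp add: o_def)
    have oN: "openin T N" unfolding N_def
      by (rule openin_continuous_map_preimage[OF cm W(1)])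
    have xN: "x \<in> N" unfolding N_def using xX W(2) diff_zero sm_zero by simp
    have "N \<subseteq> {x \<in> topspace T. f x \<in> U}"
    proof
      fix z assume z: "z \<in> N"
      then have zX: "z \<in> X" and zW: "rs r (seq_diff z x) \<in> W" unfolding N_def by auto
      have wX: "seq_diff z x \<in> X" using zX xX diff_in by blast
      have "seq_add x (seq_diff z x) = z" by (auto simp: seq_add_def seq_diff_def)
      then have fz: "f z = f x + f (seq_diff z x)" using fadd[OF xX wX] by simp
      have "cmod (f (rs r (seq_diff z x))) \<le> K" using bnd zW by blast
      then have "r * cmod (f (seq_diff z x)) \<le> K" using fhom[OF wX, of r] r by (simp add: norm_mult)
      then have "cmod (f (seq_diff z x)) \<le> K / r" using r by (simp add: field_simps)
      also have "K / r \<le> K' / r" using K' r by (simp add: divide_right_mono)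
      also have "K' / r = e / 2" unfolding r_def using K' e by simp
      finally have "cmod (f (seq_diff z x)) < e" using e by simp
      then have "f z \<in> ball (f x) e" using fz by (simp add: dist_norm)
      then show "z \<in> {x \<in> topspace T. f x \<in> U}" using e zX by auto
    qed
    then show "\<exists>N. openin T N \<and> x \<in> N \<and> N \<subseteq> {x \<in> topspace T. f x \<in> U}"
      using oN xN by blast
  qed
qed

lemma closure_add:
  assumes "S \<subseteq> X" "\<And>a b. a \<in> S \<Longrightarrow> b \<in> S \<Longrightarrow> seq_add a b \<in> S"
    and "a \<in> T closure_of S" "b \<in> T closure_of S"
  shows "seq_add a b \<in> T closure_of S"
proof -
  have "(a, b) \<in> prod_topology T T closure_of (S \<times> S)"
    using assms(3,4) by (simp add: closure_of_Times)
  then have "(\<lambda>(x, y). seq_add x y) (a, b) \<in> T closure_of ((\<lambda>(x, y). seq_add x y) ` (S \<times> S))"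
    using continuous_map_image_closure_subset[OF cont_add] by blast
  moreover have "(\<lambda>(x, y). seq_add x y) ` (S \<times> S) \<subseteq> S" using assms(2) by auto
  ultimately show ?thesis using closure_of_mono by fastforce
qed

lemma closure_sm:
  assumes "\<And>a. a \<in> S \<Longrightarrow> seq_smult c a \<in> S" and "a \<in> T closure_of S"
  shows "seq_smult c a \<in> T closure_of S"
proof -
  have "seq_smult c a \<in> T closure_of (seq_smult c ` S)"
    using continuous_map_image_closure_subset[OF cont_sm, of c S] assms(2) by blast
  moreover have "seq_smult c ` S \<subseteq> S" using assms(1) by auto
  ultimately show ?thesis using closure_of_mono by fastforce
qed

end

context fk begin

lemma exists_functional:
  assumes phiX: "phi \<subseteq> X" and sK: "has_sigma_K p q T (T closure_of phi)"
    and y: "y \<in> d_dual p q (T closure_of phi)"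
  shows "\<exists>f\<in>cdual X T. \<forall>j. f (delta j) = y j"
proof -
  define Y where "Y = T closure_of phi"
  have YX: "Y \<subseteq> X" unfolding Y_def using closure_of_subset_topspace[of T phi] by simp
  have phiY: "phi \<subseteq> Y" unfolding Y_def using closure_of_subset[of phi T] phiX by simp
  have Ycl: "closedin T Y" unfolding Y_def by simp
  have Yadd: "seq_add a b \<in> Y" if "a \<in> Y" "b \<in> Y" for a b
    using closure_add[OF phiX phi_add] that unfolding Y_def by blast
  have Ysm: "seq_smult c a \<in> Y" if "a \<in> Y" for a c
    using closure_sm[OF phi_sm] that unfolding Y_def by blast
  have zY: "zero_seq \<in> Y" using phiY zero_phi by blast
  have conv: "convergent (\<lambda>n. gen p q n z y)" if "z \<in> Y" for z
  proof -
    have "(\<lambda>n. y n * z n) \<in> sigma_s p q" using y that unfolding d_dual_def Y_def by blast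
    then show ?thesis unfolding sigma_s_def gen_def by (simp add: mult.commute)
  qed
  define g where "g z = lim (\<lambda>n. gen p q n z y)" for z
  have gt: "(\<lambda>n. gen p q n z y) \<longlonglongrightarrow> g z" if "z \<in> Y" for z
    using conv[OF that] unfolding g_def by (simp add: convergent_LIMSEQ_iff)
  have gadd: "g (seq_add a b) = g a + g b" if "a \<in> Y" "b \<in> Y" for a b
  proof -
    have "(\<lambda>n. gen p q n (seq_add a b) y) \<longlonglongrightarrow> g a + g b"
      unfolding gen_add using tendsto_add[OF gt[OF that(1)] gt[OF that(2)]] .
    then show ?thesis using gt[OF Yadd[OF that]] LIMSEQ_unique by blast
  qed
  have gsm: "g (seq_smult c a) = c * g a" if "a \<in> Y" for a c
  proof -
    have "(\<lambda>n. gen p q n (seq_smult c a) y) \<longlonglongrightarrow> c * g a"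
      unfolding gen_sm using tendsto_mult_left[OF gt[OF that]] .
    then show ?thesis using gt[OF Ysm[OF that]] LIMSEQ_unique by blast
  qed
  define E where "E m = (\<Inter>n. {z \<in> topspace T. gen p q n z y \<in> cball 0 (real m)})" for m :: nat
  have Ecl: "closedin T (E m)" for m
    unfolding E_def
    by (intro closedin_INT closedin_continuous_map_preimage[OF gen_cont]) auto
  have cover: "Y \<subseteq> (\<Union>m. E m)"
  proof
    fix z assume z: "z \<in> Y"
    obtain K where K: "\<forall>n. norm (gen p q n z y) \<le> K"
      using convergent_imp_Bseq[OF conv[OF z]] by (metis BseqE)
    have "norm (gen p q n z y) \<le> real (nat \<lceil>K\<rceil>)" for n
      using K real_nat_ceiling_ge order_trans by blast
    then have "z \<in> E (nat \<lceil>K\<rceil>)" unfolding E_def using z YX by auto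
    then show "z \<in> (\<Union>m. E m)" by blast
  qed
  obtain m z0 G where G: "openin T G" "z0 \<in> G" "z0 \<in> Y" "G \<inter> Y \<subseteq> E m"
    using baire[OF Ycl Ecl cover] zY by blast
  have z0X: "z0 \<in> X" using G YX by blast
  define U where "U = {u \<in> topspace T. seq_add z0 u \<in> G}"
  have Uo: "openin T U" unfolding U_def
    by (rule openin_continuous_map_preimage[OF cont_addl[OF z0X] G(1)])
  have "seq_add z0 zero_seq = z0" by (auto simp: seq_add_def zero_seq_def)
  then have U0: "zero_seq \<in> U" unfolding U_def using G by simp
  obtain V where V: "openin T V" "zero_seq \<in> V" "seq_convex V" "V \<subseteq> U"
    using lconv[OF Uo U0] by blast
  define C where "C = 2 * real m + 1"
  have C: "C > 0" unfolding C_def by simp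
  have gb: "cmod (g u) \<le> C" if "u \<in> V" "u \<in> Y" for u
  proof -
    have uU: "seq_add z0 u \<in> G" using that V(4) unfolding U_def by blast
    have "seq_add z0 u \<in> E m" using uU Yadd[OF G(3) that(2)] G(4) by blast
    then have b1: "norm (gen p q n (seq_add z0 u) y) \<le> real m" for n unfolding E_def by auto
    have "z0 \<in> E m" using G by blast
    then have b2: "norm (gen p q n z0 y) \<le> real m" for n unfolding E_def by auto
    have "norm (gen p q n u y) \<le> 2 * real m" for n
    proof -
      have "gen p q n u y = gen p q n (seq_add z0 u) y - gen p q n z0 y" by (simp add: gen_add)
      then have "norm (gen p q n u y) \<le> norm (gen p q n (seq_add z0 u) y) + norm (gen p q n z0 y)"
        by (metis norm_triangle_ineq4)
      then show ?thesis using b1[of n] b2[of n] by simp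
    qed
    then have "norm (g u) \<le> 2 * real m"
      by (intro LIMSEQ_le_const2[OF tendsto_norm[OF gt[OF that(2)]]]) auto
    then show ?thesis unfolding C_def by simp
  qed
  define S where "S u = {t::real. t > 0 \<and> rs (1 / t) u \<in> V}" for u
  define mu where "mu u = Inf (S u)" for u
  have Sne: "S u \<noteq> {}" if uX: "u \<in> X" for u
  proof -
    have "openin euclidean {c \<in> topspace euclidean. seq_smult c u \<in> V}"
      by (rule openin_continuous_map_preimage[OF cont_scal[OF uX] V(1)])
    then have o: "open {c. seq_smult c u \<in> V}" by simp
    have "seq_smult 0 u = zero_seq" by (auto simp: seq_smult_def zero_seq_def)
    then have "0 \<in> {c. seq_smult c u \<in> V}" using V(2) by simp
    then obtain e where e: "e > 0" "ball 0 e \<subseteq> {c. seq_smult c u \<in> V}"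
      using o open_contains_ball by blast
    have m: "complex_of_real (e / 2) \<in> ball 0 e" using e by simp
    have "seq_smult (complex_of_real (e / 2)) u \<in> V" using e(2) m by blast
    moreover have "1 / (2 / e) = e / 2" by simp
    ultimately have "rs (1 / (2 / e)) u \<in> V" by metis
    then have "2 / e \<in> S u" unfolding S_def using e by simp
    then show ?thesis by blast
  qed
  have Sbdd: "bdd_below (S u)" for u unfolding S_def bdd_below_def by (rule exI[of _ 0]) auto
  have mu_le: "mu u \<le> t" if "t \<in> S u" for u t unfolding mu_def by (rule cInf_lower[OF that Sbdd])
  have mu_ge: "b \<le> mu u" if "u \<in> X" "\<And>t. t \<in> S u \<Longrightarrow> b \<le> t" for u b
    unfolding mu_def by (rule cInf_greatest[OF Sne[OF that(1)]]) (use that in blast)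
  have S_add: "s + t \<in> S (seq_add u w)" if "s \<in> S u" "t \<in> S w" for s t u w
  proof -
    have st: "s > 0" "t > 0" "rs (1 / s) u \<in> V" "rs (1 / t) w \<in> V" using that unfolding S_def by auto
    define l where "l = s / (s + t)"
    have l: "0 \<le> l" "l \<le> 1" unfolding l_def using st by auto
    have "seq_add (rs l (rs (1 / s) u)) (rs (1 - l) (rs (1 / t) w)) \<in> V"
      using V(3) st l unfolding seq_convex_def by blast
    moreover have "seq_add (rs l (rs (1 / s) u)) (rs (1 - l) (rs (1 / t) w)) = rs (1 / (s + t)) (seq_add u w)"
    proof (rule seq_eqI)
      fix i
      have "1 - l = t / (s + t)" unfolding l_def using st by (simp add: field_simps)
      then show "seq_add (rs l (rs (1 / s) u)) (rs (1 - l) (rs (1 / t) w)) i = rs (1 / (s + t)) (seq_add u w) i"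
        unfolding l_def using st by (simp add: seq_add_def seq_smult_def field_simps) (simp add: add_divide_distrib)
    qed
    ultimately show ?thesis unfolding S_def using st by simp
  qed
  have mu_add: "mu (seq_add u w) \<le> mu u + mu w" if "u \<in> X" "w \<in> X" for u w
  proof -
    have "mu (seq_add u w) - t \<le> mu u" if t: "t \<in> S w" for t
      using mu_le[OF S_add[OF _ t]] by (intro mu_ge[OF \<open>u \<in> X\<close>]) (simp add: algebra_simps)
    then have "mu (seq_add u w) - mu u \<le> mu w"
      by (intro mu_ge[OF \<open>w \<in> X\<close>]) (simp add: algebra_simps)
    then show ?thesis by simp
  qed
  have mu_hom: "mu (rs t u) = t * mu u" if uX: "u \<in> X" and t: "t > 0" for u t
  proof (rule antisym)
    have "mu (rs t u) / t \<le> mu u"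
    proof (rule mu_ge[OF uX])
      fix s assume s: "s \<in> S u"
      have "rs (1 / (t * s)) (rs t u) = rs (1 / s) u"
        using t by (intro seq_eqI) (simp add: seq_smult_def)
      then have "t * s \<in> S (rs t u)" using s t unfolding S_def by simp
      then have "mu (rs t u) \<le> t * s" by (rule mu_le)
      then show "mu (rs t u) / t \<le> s" using t by (simp add: field_simps)
    qed
    then show "mu (rs t u) \<le> t * mu u" using t by (simp add: field_simps)
  next
    show "t * mu u \<le> mu (rs t u)"
    proof (rule mu_ge[OF sm_in[OF uX]])
      fix r assume r: "r \<in> S (rs t u)"
      have "rs (1 / (r / t)) u = rs (1 / r) (rs t u)"
        using t by (intro seq_eqI) (simp add: seq_smult_def)
      then have "r / t \<in> S u" using r t unfolding S_def by simp
      then have "mu u \<le> r / t" by (rule mu_le)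
      then show "t * mu u \<le> r" using t by (simp add: field_simps)
    qed
  qed
  have mu_V: "mu u \<le> 1" if "u \<in> V" for u
  proof -
    have "rs (1 / 1) u = u" by (intro seq_eqI) (simp add: seq_smult_def)
    then have "1 \<in> S u" using that unfolding S_def by simp
    then show ?thesis by (rule mu_le)
  qed
  have VX: "V \<subseteq> X" using V(1) openin_subset by fastforce
  have gsmr: "g (rs t a) = complex_of_real t * g a" if "a \<in> Y" for a t using gsm[OF that] .
  have h_le: "Re (g u) \<le> C * mu u" if uY: "u \<in> Y" for u
  proof -
    have "Re (g u) / C \<le> mu u"
    proof (rule mu_ge)
      show "u \<in> X" using uY YX by blast
      fix s assume s: "s \<in> S u"
      then have s0: "s > 0" and sV: "rs (1 / s) u \<in> V" unfolding S_def by auto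
      have "cmod (g (rs (1 / s) u)) \<le> C" using gb[OF sV Ysm[OF uY]] .
      then have "cmod (g u) / s \<le> C" using gsmr[OF uY, of "1 / s"] s0 by (simp add: norm_mult norm_divide)
      then have "cmod (g u) \<le> C * s" using s0 by (simp add: field_simps)
      then have "Re (g u) \<le> C * s" using complex_Re_le_cmod order_trans by blast
      then show "Re (g u) / C \<le> s" using C by (simp add: field_simps)
    qed
    then show ?thesis using C by (simp add: field_simps)
  qed
  interpret H: hb X Y "\<lambda>u. C * mu u" "\<lambda>u. Re (g u)"
  proof
    show "\<And>x y. x \<in> X \<Longrightarrow> y \<in> X \<Longrightarrow> seq_add x y \<in> X" by (rule add_in)
    show "\<And>x t. x \<in> X \<Longrightarrow> rs t x \<in> X" by (rule sm_in)
    show "Y \<subseteq> X" by (rule YX)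
    show "zero_seq \<in> Y" by (rule zY)
    show "\<And>x y. x \<in> Y \<Longrightarrow> y \<in> Y \<Longrightarrow> seq_add x y \<in> Y" by (rule Yadd)
    show "\<And>x t. x \<in> Y \<Longrightarrow> rs t x \<in> Y" by (rule Ysm)
    show "\<And>x y. x \<in> X \<Longrightarrow> y \<in> X \<Longrightarrow> C * mu (seq_add x y) \<le> C * mu x + C * mu y"
      using mu_add C by (simp add: distrib_left[symmetric])
    show "\<And>x t. x \<in> X \<Longrightarrow> 0 < t \<Longrightarrow> C * mu (rs t x) = t * (C * mu x)"
      using mu_hom by simp
    show "\<And>x y. x \<in> Y \<Longrightarrow> y \<in> Y \<Longrightarrow> Re (g (seq_add x y)) = Re (g x) + Re (g y)"
      using gadd by simp
    show "\<And>x t. x \<in> Y \<Longrightarrow> Re (g (rs t x)) = t * Re (g x)"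
      using gsmr by simp
    show "\<And>x. x \<in> Y \<Longrightarrow> Re (g x) \<le> C * mu x" by (rule h_le)
  qed
  obtain F where F: "\<And>x y. x \<in> X \<Longrightarrow> y \<in> X \<Longrightarrow> F (seq_add x y) = F x + F y"
    "\<And>t x. x \<in> X \<Longrightarrow> F (rs t x) = t * F x"
    "\<And>x. x \<in> X \<Longrightarrow> F x \<le> C * mu x" "\<And>x. x \<in> Y \<Longrightarrow> F x = Re (g x)"
    using H.hahn_banach by blast
  define f where "f z = complex_of_real (F z) - \<i> * complex_of_real (F (seq_smult \<i> z))" for z
  have fadd: "f (seq_add a b) = f a + f b" if "a \<in> X" "b \<in> X" for a b
  proof -
    have "seq_smult \<i> (seq_add a b) = seq_add (seq_smult \<i> a) (seq_smult \<i> b)"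
      by (intro seq_eqI) (simp add: seq_smult_def seq_add_def algebra_simps)
    then show ?thesis unfolding f_def using F(1) that sm_in by (simp add: algebra_simps)
  qed
  have fsm: "f (seq_smult c a) = c * f a" if aX: "a \<in> X" for a c
  proof -
    have iaX: "seq_smult \<i> a \<in> X" using sm_in aX by blast
    have e1: "seq_smult c a = seq_add (rs (Re c) a) (rs (Im c) (seq_smult \<i> a))"
      by (intro seq_eqI) (simp add: seq_smult_def seq_add_def algebra_simps complex_eq_iff)
    have e2: "seq_smult \<i> (seq_smult c a) = seq_add (rs (Re c) (seq_smult \<i> a)) (rs (- Im c) a)"
      by (intro seq_eqI) (simp add: seq_smult_def seq_add_def algebra_simps complex_eq_iff)
    have F1: "F (seq_smult c a) = Re c * F a + Im c * F (seq_smult \<i> a)"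
      unfolding e1 using F(1,2) sm_in aX iaX by simp
    have F2: "F (seq_smult \<i> (seq_smult c a)) = Re c * F (seq_smult \<i> a) - Im c * F a"
    proof -
      have "F (seq_smult \<i> (seq_smult c a)) = F (rs (Re c) (seq_smult \<i> a)) + F (rs (- Im c) a)"
        unfolding e2 using F(1) sm_in iaX aX by blast
      also have "\<dots> = Re c * F (seq_smult \<i> a) + (- Im c) * F a"
        by (simp only: F(2)[OF iaX] F(2)[OF aX])
      finally show ?thesis by simp
    qed
    show ?thesis unfolding f_def F1 F2 by (simp add: complex_eq_iff algebra_simps)
  qed
  have fY: "f z = g z" if zY': "z \<in> Y" for z
  proof -
    have "F z = Re (g z)" using F(4) zY' by blast
    moreover have "F (seq_smult \<i> z) = Re (g (seq_smult \<i> z))" using F(4) Ysm[OF zY'] by blast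
    moreover have "g (seq_smult \<i> z) = \<i> * g z" using gsm[OF zY'] .
    ultimately show ?thesis unfolding f_def by (simp add: complex_eq_iff)
  qed
  have Fb: "\<bar>F u\<bar> \<le> C" if "u \<in> V" "seq_smult (-1) u \<in> V" for u
  proof -
    have uX: "u \<in> X" using that VX by blast
    have "F u \<le> C * mu u" using F(3) uX by blast
    also have "\<dots> \<le> C" using mu_V[OF that(1)] C by simp
    finally have a: "F u \<le> C" .
    have "F (rs (-1) u) \<le> C * mu (rs (-1) u)" using F(3) sm_in[OF uX] by blast
    also have "\<dots> \<le> C" using mu_V that(2) C by simp
    finally have "- F u \<le> C" using F(2)[OF uX, of "-1"] by simp
    then show ?thesis using a by simp
  qed
  define W where "W = {u \<in> topspace T. u \<in> V} \<inter> {u \<in> topspace T. seq_smult (-1) u \<in> V}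
     \<inter> {u \<in> topspace T. seq_smult \<i> u \<in> V} \<inter> {u \<in> topspace T. seq_smult (- \<i>) u \<in> V}"
  have Wo: "openin T W" unfolding W_def
    by (intro openin_Int openin_continuous_map_preimage[OF cont_sm V(1)]
        openin_continuous_map_preimage[OF continuous_map_id V(1), unfolded id_def])
  have W0: "zero_seq \<in> W" unfolding W_def using V(2) sm_zero by simp
  have fb: "cmod (f u) \<le> 2 * C" if "u \<in> W" for u
  proof -
    have u: "u \<in> V" "seq_smult (-1) u \<in> V" "seq_smult \<i> u \<in> V" "seq_smult (- \<i>) u \<in> V"
      using that unfolding W_def by auto
    have "seq_smult (-1) (seq_smult \<i> u) = seq_smult (- \<i>) u"
      by (intro seq_eqI) (simp add: seq_smult_def)
    then have b2: "\<bar>F (seq_smult \<i> u)\<bar> \<le> C" using Fb[OF u(3)] u(4) by simp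
    have b1: "\<bar>F u\<bar> \<le> C" using Fb u by blast
    have "cmod (f u) \<le> cmod (complex_of_real (F u)) + cmod (\<i> * complex_of_real (F (seq_smult \<i> u)))"
      unfolding f_def by (rule norm_triangle_ineq4)
    also have "\<dots> = \<bar>F u\<bar> + \<bar>F (seq_smult \<i> u)\<bar>" by (simp add: norm_mult)
    finally show ?thesis using b1 b2 by simp
  qed
  have fcont: "continuous_map T euclidean f"
    by (rule bounded_cont[OF fadd fsm Wo W0 fb])
  have fdual: "f \<in> cdual X T" unfolding cdual_def using fadd fsm fcont by blast
  have fdelta: "f (delta j) = y j" for j
  proof -
    have dY: "delta j \<in> Y" using phiY delta_phi by blast
    have "limitin T (avg_section p q (delta j)) (delta j) sequentially"
      using sK dY unfolding has_sigma_K_def Y_def by blast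
    from continuous_map_limit[OF cont_coord this, of j]
    have "(\<lambda>n. avg_section p q (delta j) n j) \<longlonglongrightarrow> 1" by (simp add: o_def delta_def)
    then have "(\<lambda>n. gen p q n (delta j) y) \<longlonglongrightarrow> y j * 1"
      unfolding gen_delta by (rule tendsto_mult_left)
    then have "g (delta j) = y j" using gt[OF dY] LIMSEQ_unique by fastforce
    then show ?thesis using fY[OF dY] by simp
  qed
  show ?thesis using fdual fdelta by blast
qed

lemma partB:
  assumes phiX: "phi \<subseteq> X" and sK: "has_sigma_K p q T (T closure_of phi)"
  shows "DF_plus p q X T \<subseteq> d_dual p q (d_dual p q (T closure_of phi))"
proof
  fix x assume x: "x \<in> DF_plus p q X T"
  show "x \<in> d_dual p q (d_dual p q (T closure_of phi))"
    unfolding d_dual_def[of p q "d_dual p q (T closure_of phi)"]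
  proof (intro CollectI ballI)
    fix y assume y: "y \<in> d_dual p q (T closure_of phi)"
    obtain f where f: "f \<in> cdual X T" "\<And>j. f (delta j) = y j"
      using exists_functional[OF phiX sK y] by blast
    have "convergent (\<lambda>n. (\<Sum>k\<in>{p n + 1..q n}. \<Sum>j<k. x j * f (delta j)) / of_nat (q n - p n))"
      using x f(1) unfolding DF_plus_def by blast
    then show "(\<lambda>n. x n * y n) \<in> sigma_s p q" unfolding sigma_s_def using f(2) by simp
  qed
qed

end

theorem mainTheorem13:
  fixes X :: "seq set" and T :: "seq topology" and p q :: "nat \<Rightarrow> nat"
  assumes "\<forall>n. p n < q n"
    and "filterlim q at_top sequentially"
    and "FK_space X T"
    and "phi \<subseteq> X"
    and "has_sigma_K p q T (T closure_of phi)"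
  shows "DF_plus p q X T = d_dual p q (d_dual p q (T closure_of phi))"
proof -
  interpret fk X T by (rule fk.intro) (rule assms(3))
  show ?thesis using partA[OF assms(4,5)] partB[OF assms(4,5)] by blast
qed


end
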